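(* Let $M$ be a unique expansion matroid on a finite set $E$ with $r(M)>0$, and let $B\subseteq E$. Then $B\in\mathcal{B}(M)$ if and only if $B\subseteq\cup\mathcal{B}(M)$ and $|B\cap D|=1$ for every $D\in F(M)$.
   Context: For a matroid $M$: $\mathcal{I}(M)$ its independent sets, $\mathcal{B}(M)$ its bases, $\cup\mathcal{B}(M)$ the union of all bases, $r(M)$ the size of a base, $r(X)$ the rank of $X\subseteq E$. $s(M)=\{A\in\mathcal{I}(M): |A|=r(M)-1\}$; $K_M(X)=\{a\in E: r(X\cup\{a\})=r(X)+1\}$; $F(M)=\{K_M(X): X\in s(M)\}$. $M$ is a unique expansion matroid if for every $B\in\mathcal{B}(M)$ and every $A\in s(M)$, whenever $e_1,e_2\in B$ satisfy $A\cup\{e_1\}\in\mathcal{B}(M)$ and $A\cup\{e_2\}\in\mathcal{B}(M)$, then $e_1=e_2$. *)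

theory Defs
  imports Main
begin

definition matroid :: "'a set \<Rightarrow> 'a set set \<Rightarrow> bool" where
  "matroid E \<I> \<longleftrightarrow> finite E \<and> (\<forall>A\<in>\<I>. A \<subseteq> E) \<and> {} \<in> \<I> \<and>
     (\<forall>A B. A \<in> \<I> \<and> B \<subseteq> A \<longrightarrow> B \<in> \<I>) \<and>
     (\<forall>A B. A \<in> \<I> \<and> B \<in> \<I> \<and> card A < card B \<longrightarrow> (\<exists>e\<in>B - A. insert e A \<in> \<I>))"

definition mrank :: "'a set set \<Rightarrow> 'a set \<Rightarrow> nat" where
  "mrank \<I> X = Max (card ` {A. A \<in> \<I> \<and> A \<subseteq> X})"

definition bases :: "'a set set \<Rightarrow> 'a set set" where
  "bases \<I> = {B. B \<in> \<I> \<and> (\<forall>A\<in>\<I>. B \<subseteq> A \<longrightarrow> A = B)}"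

definition matroid_rank :: "'a set \<Rightarrow> 'a set set \<Rightarrow> nat" where
  "matroid_rank E \<I> = mrank \<I> E"

definition s_sets :: "'a set \<Rightarrow> 'a set set \<Rightarrow> 'a set set" where
  "s_sets E \<I> = {A. A \<in> \<I> \<and> card A = matroid_rank E \<I> - 1}"

definition K_M :: "'a set \<Rightarrow> 'a set set \<Rightarrow> 'a set \<Rightarrow> 'a set" where
  "K_M E \<I> X = {a\<in>E. mrank \<I> (insert a X) = mrank \<I> X + 1}"

definition F_M :: "'a set \<Rightarrow> 'a set set \<Rightarrow> 'a set set" where
  "F_M E \<I> = K_M E \<I> ` s_sets E \<I>"

definition unique_expansion :: "'a set \<Rightarrow> 'a set set \<Rightarrow> bool" where
  "unique_expansion E \<I> \<longleftrightarrow>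
     (\<forall>B\<in>bases \<I>. \<forall>A\<in>s_sets E \<I>. \<forall>e1\<in>B. \<forall>e2\<in>B.
        insert e1 A \<in> bases \<I> \<and> insert e2 A \<in> bases \<I> \<longrightarrow> e1 = e2)"

end

theory Submission
  imports Defs
begin

lemma m_fin: "matroid E Ind \<Longrightarrow> A \<in> Ind \<Longrightarrow> finite A"
  unfolding matroid_def by (meson finite_subset)

lemma m_sub: "matroid E Ind \<Longrightarrow> A \<in> Ind \<Longrightarrow> B \<subseteq> A \<Longrightarrow> B \<in> Ind"
  unfolding matroid_def by blast

lemma m_empty: "matroid E Ind \<Longrightarrow> {} \<in> Ind"
  unfolding matroid_def by blast

lemma m_aug: "matroid E Ind \<Longrightarrow> A \<in> Ind \<Longrightarrow> B \<in> Ind \<Longrightarrow> card A < card B \<Longrightarrow> \<exists>e\<in>B - A. insert e A \<in> Ind"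
  unfolding matroid_def by blast

lemma m_augment:
  assumes M: "matroid E Ind" and J: "J \<in> Ind"
  shows "I \<in> Ind \<Longrightarrow> card I \<le> card J \<Longrightarrow> \<exists>K. K \<in> Ind \<and> I \<subseteq> K \<and> K \<subseteq> I \<union> J \<and> card K = card J"
proof (induction "card J - card I" arbitrary: I)
  case 0
  then show ?case by auto
next
  case (Suc n)
  then have "card I < card J" by auto
  then obtain e where e: "e \<in> J - I" "insert e I \<in> Ind" using m_aug[OF M Suc(3) J] by auto
  have fI: "finite I" using m_fin[OF M Suc(3)] .
  have ci: "card (insert e I) = card I + 1" using e fI by auto
  have "\<exists>K. K \<in> Ind \<and> insert e I \<subseteq> K \<and> K \<subseteq> insert e I \<union> J \<and> card K = card J"
    using Suc(1)[of "insert e I"] Suc(2) e ci \<open>card I < card J\<close> by auto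
  then show ?case using e by blast
qed

lemma cardset_fin: "finite Y \<Longrightarrow> finite (card ` {A. A \<in> Ind \<and> A \<subseteq> Y})"
  by (rule finite_imageI) (auto intro: rev_finite_subset[of "Pow Y"])

lemma mrank_le:
  assumes M: "matroid E Ind" and fY: "finite Y"
  shows "mrank Ind Y \<le> card Y"
  unfolding mrank_def
proof (rule Max.boundedI[OF cardset_fin[OF fY]])
  show "card ` {A. A \<in> Ind \<and> A \<subseteq> Y} \<noteq> {}" using m_empty[OF M] by auto
  show "\<And>a. a \<in> card ` {A. A \<in> Ind \<and> A \<subseteq> Y} \<Longrightarrow> a \<le> card Y"
    using fY card_mono by auto
qed

lemma mrank_indep:
  assumes M: "matroid E Ind" and Y: "Y \<in> Ind"
  shows "mrank Ind Y = card Y"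
proof -
  have fY: "finite Y" using m_fin[OF M Y] .
  have "card Y \<le> mrank Ind Y" unfolding mrank_def
    by (rule Max_ge[OF cardset_fin[OF fY]]) (use Y in auto)
  then show ?thesis using mrank_le[OF M fY] by auto
qed

lemma mrank_eq_card:
  assumes M: "matroid E Ind" and fY: "finite Y" and eq: "mrank Ind Y = card Y"
  shows "Y \<in> Ind"
proof -
  have ne: "card ` {A. A \<in> Ind \<and> A \<subseteq> Y} \<noteq> {}" using m_empty[OF M] by auto
  have "mrank Ind Y \<in> card ` {A. A \<in> Ind \<and> A \<subseteq> Y}"
    unfolding mrank_def by (rule Max_in[OF cardset_fin[OF fY] ne])
  then obtain A where A: "A \<in> Ind" "A \<subseteq> Y" "card A = card Y" using eq by auto
  then have "A = Y" using fY card_subset_eq by blast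
  then show ?thesis using A by simp
qed

lemma K_char:
  assumes M: "matroid E Ind" and X: "X \<in> Ind"
  shows "a \<in> K_M E Ind X \<longleftrightarrow> a \<in> E \<and> a \<notin> X \<and> insert a X \<in> Ind"
proof -
  have fX: "finite X" using m_fin[OF M X] .
  have "mrank Ind (insert a X) = mrank Ind X + 1 \<longleftrightarrow> a \<notin> X \<and> insert a X \<in> Ind"
  proof
    assume h: "mrank Ind (insert a X) = mrank Ind X + 1"
    have a: "a \<notin> X" using h by (cases "a \<in> X") (auto simp: insert_absorb)
    then have "mrank Ind (insert a X) = card (insert a X)"
      using h mrank_indep[OF M X] fX by simp
    then show "a \<notin> X \<and> insert a X \<in> Ind" using a mrank_eq_card[OF M] fX by auto
  next
    assume "a \<notin> X \<and> insert a X \<in> Ind"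
    then show "mrank Ind (insert a X) = mrank Ind X + 1"
      using mrank_indep[OF M] X fX by simp
  qed
  then show ?thesis unfolding K_M_def by auto
qed

lemma rank_props:
  assumes M: "matroid E Ind"
  shows "\<exists>A\<in>Ind. card A = matroid_rank E Ind"
    and "A \<in> Ind \<Longrightarrow> card A \<le> matroid_rank E Ind"
proof -
  have fE: "finite E" using M unfolding matroid_def by blast
  have ne: "card ` {A. A \<in> Ind \<and> A \<subseteq> E} \<noteq> {}" using m_empty[OF M] by auto
  have "mrank Ind E \<in> card ` {A. A \<in> Ind \<and> A \<subseteq> E}"
    unfolding mrank_def by (rule Max_in[OF cardset_fin[OF fE] ne])
  then show "\<exists>A\<in>Ind. card A = matroid_rank E Ind" unfolding matroid_rank_def by auto
  assume A: "A \<in> Ind"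
  have "A \<subseteq> E" using M A unfolding matroid_def by blast
  then show "card A \<le> matroid_rank E Ind" unfolding matroid_rank_def mrank_def
    by (intro Max_ge[OF cardset_fin[OF fE]]) (use A in auto)
qed

lemma bases_char:
  assumes M: "matroid E Ind"
  shows "B \<in> bases Ind \<longleftrightarrow> B \<in> Ind \<and> card B = matroid_rank E Ind"
proof
  assume B: "B \<in> bases Ind"
  then have BI: "B \<in> Ind" and mx: "\<forall>A\<in>Ind. B \<subseteq> A \<longrightarrow> A = B" unfolding bases_def by auto
  obtain A where A: "A \<in> Ind" "card A = matroid_rank E Ind" using rank_props(1)[OF M] by auto
  have le: "card B \<le> matroid_rank E Ind" using rank_props(2)[OF M BI] .
  have "\<not> card B < card A"
  proof
    assume "card B < card A"
    then obtain e where "e \<in> A - B" "insert e B \<in> Ind" using m_aug[OF M BI A(1)] by auto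
    then show False using mx by blast
  qed
  then show "B \<in> Ind \<and> card B = matroid_rank E Ind" using A le BI by auto
next
  assume h: "B \<in> Ind \<and> card B = matroid_rank E Ind"
  have "\<forall>A\<in>Ind. B \<subseteq> A \<longrightarrow> A = B"
  proof (intro ballI impI)
    fix A assume A: "A \<in> Ind" "B \<subseteq> A"
    have "card A \<le> card B" using rank_props(2)[OF M A(1)] h by simp
    then show "A = B" using A m_fin[OF M A(1)] card_seteq by blast
  qed
  then show "B \<in> bases Ind" using h unfolding bases_def by auto
qed

theorem proposition7:
  fixes E :: "'a set" and \<I> :: "'a set set" and B :: "'a set"
  assumes "matroid E \<I>"
    and "unique_expansion E \<I>"
    and "matroid_rank E \<I> > 0"
    and "B \<subseteq> E"
  shows "B \<in> bases \<I> \<longleftrightarrow>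
           (B \<subseteq> \<Union>(bases \<I>) \<and> (\<forall>D\<in>F_M E \<I>. card (B \<inter> D) = 1))"
proof -
  note M = assms(1)
  define r where "r = matroid_rank E \<I>"
  have fE: "finite E" using M unfolding matroid_def by blast
  have fB: "finite B" using assms(4) fE finite_subset by blast
  show ?thesis
  proof
    assume B: "B \<in> bases \<I>"
    have BI: "B \<in> \<I>" and cB: "card B = r" using bases_char[OF M] B r_def by auto
    have "\<forall>D\<in>F_M E \<I>. card (B \<inter> D) = 1"
    proof
      fix D assume "D \<in> F_M E \<I>"
      then obtain X where X: "X \<in> \<I>" "card X = r - 1" and D: "D = K_M E \<I> X"
        unfolding F_M_def s_sets_def r_def by auto
      have fX: "finite X" using m_fin[OF M X(1)] .
      obtain K where K: "K \<in> \<I>" "X \<subseteq> K" "K \<subseteq> X \<union> B" "card K = r"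
        using m_augment[OF M BI X(1)] X cB by auto
      have fK: "finite K" using m_fin[OF M K(1)] .
      have "card X < card K" using K X assms(3) r_def by simp
      then have "K \<noteq> X" by auto
      then obtain e where e: "e \<in> K" "e \<notin> X" using K(2) by blast
      have eB: "e \<in> B" using e K by auto
      have "insert e X \<subseteq> K" using e K by auto
      moreover have "card (insert e X) = card K" using e fX X K assms(3) r_def by simp
      ultimately have "insert e X = K" using fK card_subset_eq by blast
      then have eK: "e \<in> D" unfolding D using K_char[OF M X(1)] e eB assms(4) K by auto
      have uniq: "y = e" if y: "y \<in> B \<inter> D" for y
      proof -
        have y1: "y \<notin> X" "insert y X \<in> \<I>" using y K_char[OF M X(1)] D by auto
        have "card (insert y X) = r" using y1 fX X assms(3) r_def by simp
        then have yb: "insert y X \<in> bases \<I>" using bases_char[OF M] y1 r_def by auto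
        have eb: "insert e X \<in> bases \<I>" using \<open>insert e X = K\<close> K bases_char[OF M] r_def by auto
        have Xs: "X \<in> s_sets E \<I>" using X r_def unfolding s_sets_def by auto
        show ?thesis using assms(2) B Xs y eB yb eb unfolding unique_expansion_def by blast
      qed
      have "B \<inter> D = {e}" using uniq eK eB by blast
      then show "card (B \<inter> D) = 1" by simp
    qed
    then show "B \<subseteq> \<Union>(bases \<I>) \<and> (\<forall>D\<in>F_M E \<I>. card (B \<inter> D) = 1)" using B by auto
  next
    assume h: "B \<subseteq> \<Union>(bases \<I>) \<and> (\<forall>D\<in>F_M E \<I>. card (B \<inter> D) = 1)"
    have hD: "card (B \<inter> K_M E \<I> X) = 1" if "X \<in> \<I>" "card X = r - 1" for X
      using h that unfolding F_M_def s_sets_def r_def by auto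
    define S where "S = {A. A \<in> \<I> \<and> A \<subseteq> B}"
    have fS: "finite (card ` S)" unfolding S_def by (rule cardset_fin[OF fB])
    have neS: "card ` S \<noteq> {}" using m_empty[OF M] unfolding S_def by auto
    obtain I where I: "I \<in> \<I>" "I \<subseteq> B" "card I = Max (card ` S)"
      using Max_in[OF fS neS] unfolding S_def by auto
    have maxI: "insert z I \<notin> \<I>" if z: "z \<in> B" "z \<notin> I" for z
    proof
      assume zi: "insert z I \<in> \<I>"
      have "card (insert z I) \<le> Max (card ` S)"
        using Max_ge[OF fS] zi z I unfolding S_def by auto
      then show False using I z m_fin[OF M I(1)] by simp
    qed
    have fI: "finite I" using m_fin[OF M I(1)] .
    have Ile: "card I \<le> r" using rank_props(2)[OF M I(1)] r_def by simp
    obtain A where A: "A \<in> \<I>" "card A = r" using rank_props(1)[OF M] r_def by auto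
    show "B \<in> bases \<I>"
    proof (cases "card I < r")
      case True
      obtain K where K: "K \<in> \<I>" "I \<subseteq> K" "card K = r"
        using m_augment[OF M A(1) I(1)] A True by auto
      have fK: "finite K" using m_fin[OF M K(1)] .
      have "K \<noteq> I" using True K by auto
      then obtain b where b: "b \<in> K" "b \<notin> I" using K(2) by blast
      define X where "X = K - {b}"
      have XI: "X \<in> \<I>" using m_sub[OF M K(1)] X_def by auto
      have cX: "card X = r - 1" using X_def b K fK by simp
      have "B \<inter> K_M E \<I> X = {}"
      proof (rule ccontr)
        assume "B \<inter> K_M E \<I> X \<noteq> {}"
        then obtain z where z: "z \<in> B" "z \<notin> X" "insert z X \<in> \<I>"
          using K_char[OF M XI] by auto
        have "z \<notin> I" using z X_def K b by auto
        moreover have "insert z I \<subseteq> insert z X" using K b X_def by auto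
        then have "insert z I \<in> \<I>"
          using m_sub[OF M z(3)] by blast
        ultimately show False using maxI z by auto
      qed
      then show ?thesis using hD[OF XI cX] by simp
    next
      case False
      then have cI: "card I = r" using Ile by simp
      show ?thesis
      proof (cases "I = B")
        case True
        then show ?thesis using bases_char[OF M, of B] I cI unfolding r_def by simp
      next
        case False
        then obtain z where z: "z \<in> B" "z \<notin> I" using I by auto
        obtain B1 where B1: "B1 \<in> bases \<I>" "z \<in> B1" using h z by auto
        have B1I: "B1 \<in> \<I>" using B1 unfolding bases_def by auto
        have zI: "{z} \<in> \<I>" using m_sub[OF M B1I] B1(2) by simp
        have "card {z} \<le> card I" using cI assms(3) r_def by simp
        then obtain K where K: "K \<in> \<I>" "{z} \<subseteq> K" "K \<subseteq> {z} \<union> I" "card K = r"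
          using m_augment[OF M I(1) zI] cI by auto
        have fK: "finite K" using m_fin[OF M K(1)] .
        have "card (insert z I) = r + 1" using z fI cI by simp
        then have "insert z I \<noteq> K" using K(4) by auto
        then obtain i where i: "i \<in> I" "i \<notin> K" using K(2,3) by blast
        define X where "X = I - {i}"
        have XI: "X \<in> \<I>" using m_sub[OF M I(1)] X_def by auto
        have cX: "card X = r - 1" using X_def i cI fI by simp
        have fX: "finite X" using fI X_def by simp
        have zX: "z \<notin> X" using z X_def by simp
        have sub: "K \<subseteq> insert z X" using K i X_def by auto
        have "card (insert z X) = card K" using zX fX cX K(4) assms(3) r_def by simp
        then have KX: "K = insert z X" using card_subset_eq[OF _ sub] fX by simp
        have IX: "insert i X = I" using i X_def by auto
        have iE: "i \<in> E" using i I assms(4) by auto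
        have iX: "i \<notin> X" using X_def by simp
        have iK: "i \<in> K_M E \<I> X"
          using K_char[OF M XI] iE iX IX I(1) by simp
        have zE: "z \<in> E" using z assms(4) by auto
        have zK: "z \<in> K_M E \<I> X"
          using K_char[OF M XI] zE zX KX K(1) by simp
        have sub2: "{i, z} \<subseteq> B \<inter> K_M E \<I> X" using iK zK i z I by auto
        have "i \<noteq> z" using i z by auto
        then have c2: "card {i, z} = 2" by simp
        have "card {i, z} \<le> card (B \<inter> K_M E \<I> X)"
          using card_mono[OF _ sub2] fB by simp
        then have "2 \<le> card (B \<inter> K_M E \<I> X)" using c2 by simp
        then show ?thesis using hD[OF XI cX] by simp
      qed
    qed
  qed
qed

end
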